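(* Let $2\le k\le n$ be integers, $V=[n]$, and $\mathbf{d}\in\mathbb{Z}^n$. (a) For $a,b\in V$, if $\mathbf{d}-\mathbf{e}_a$ and $\mathbf{d}-\mathbf{e}_b$ are $k$-graphical, then $$R_{ab}(\mathbf{d})=\frac{d_a}{d_b}\cdot\frac{1-B(a,b,\mathbf{d}-\mathbf{e}_b)}{1-B(b,a,\mathbf{d}-\mathbf{e}_a)},$$ provided that $B(b,a,\mathbf{d}-\mathbf{e}_a)<1$, where for $i,j\in\{a,b\}$ and a sequence $\mathbf{d}'$, $$B(i,j,\mathbf{d}')=\frac{1}{d_i}\left(\sum_{K\in\binom{V\setminus\{a,b\}}{k-2}}P_{K\cup\{i,j\}}(\mathbf{d}')+\sum_{K\in\binom{V\setminus\{a,b\}}{k-1}}Y_{i,K,j}(\mathbf{d}')\right).$$ (b) Let $A\in\binom{V}{k-1}$ and $v\in V\setminus A$. Then $$P_{A\cup\{v\}}(\mathbf{d})=d_v\left(\sum_{B\in\binom{V\setminus\{v\}}{k-1}}R_{B,A}(\mathbf{d}-\mathbf{e}_v)\,\frac{1-P_{B\cup\{v\}}(\mathbf{d}-\mathbf{e}_{B\cup\{v\}})}{1-P_{A\cup\{v\}}(\mathbf{d}-\mathbf{e}_{A\cup\{v\}})}\right)^{-1},$$ provided that $P_{A\cup\{v\}}(\mathbf{d})>0$ and, for every $B\in\binom{V\setminus\{v\}}{k-1}$ with $A$-consistent ordering $(a_1,\dots,a_{k-1})$, $(b_1,\dots,b_{k-1})$ of $(A,B)$, the sequences $\mathbf{d}-\mathbf{e}_v-\mathbf{e}_{\{b_1,\dots,b_j,a_{j+1},\dots,a_{k-1}\}}$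 are $k$-graphical for all $j\in\{0,1,\dots,k-1\}$. (c) For $K\in\binom{V}{k-1}$ and distinct $a,b\in V\setminus K$, if $P_{K\cup\{a\}}(\mathbf{d}-\mathbf{e}_{K\cup\{a\}})<1$, then $$Y_{a,K,b}(\mathbf{d})=\frac{P_{K\cup\{a\}}(\mathbf{d})}{1-P_{K\cup\{a\}}(\mathbf{d}-\mathbf{e}_{K\cup\{a\}})}\left(P_{K\cup\{b\}}(\mathbf{d}-\mathbf{e}_{K\cup\{a\}})-Y_{a,K,b}(\mathbf{d}-\mathbf{e}_{K\cup\{a\}})\right).$$
   Context: A $k$-graph on $V=[n]$ is a set of $k$-element subsets of $V$. $\mathcal{N}(\mathbf{d})$ is the number of $k$-graphs on $V$ with degree sequence $\mathbf{d}$; $\mathbf{d}$ is $k$-graphical if $\mathcal{N}(\mathbf{d})>0$. $\mathbf{e}_a$ is the $a$-th standard basis vector and $\mathbf{e}_S=\sum_{a\in S}\mathbf{e}_a$ for $S\subseteq V$. For $a,b\in V$ with $\mathcal{N}(\mathbf{d}-\mathbf{e}_b)>0$, $R_{ab}(\mathbf{d})=\mathcal{N}(\mathbf{d}-\mathbf{e}_a)/\mathcal{N}(\mathbf{d}-\mathbf{e}_b)$. For $k$-graphical $\mathbf{d}$ and $S\subseteq V$, $P_S(\mathbf{d})$ is the probability that a uniformly random $k$-graph with degree sequence $\mathbf{d}$ contains $S$ as an edge (so $P_S=0$ if $|S|\ne k$); for $K\in\binom V{k-1}$, $a,b\in V\setminus K$, $Y_{a,K,b}(\mathbf{d})$ is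 the probability that it contains both $K\cup\{a\}$ and $K\cup\{b\}$ when $a\neq b$, and $Y_{a,K,a}(\mathbf{d})=0$. Identities are asserted whenever all quantities in them are defined. For $A,B\in\binom V{k-1}$, the $A$-consistent ordering of $(A,B)$ is the ordering $(a_1,\dots,a_{k-1})$ of $A$ and $(b_1,\dots,b_{k-1})$ of $B$ such that $a_1<\dots<a_{k-1}$, $b_i=a_i$ whenever $b_i\in A$, and the elements $b_i\notin A$ appear in increasing order of $i$. Then $R_{B,A}(\mathbf{d})=\prod_{j=1}^{k-1}R_{b_ja_j}\big(\mathbf{d}-\mathbf{e}_{\{b_1,\dots,b_{j-1},a_{j+1},\dots,a_{k-1}\}}\big)$. *)

theory Defs
  imports Complex_Main
begin

definition verts :: "nat \<Rightarrow> nat set" where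
  "verts n = {1..n}"

definition ksub :: "'a set \<Rightarrow> nat \<Rightarrow> 'a set set" where
  "ksub S m = {K. K \<subseteq> S \<and> card K = m}"

definition deg :: "nat set set \<Rightarrow> nat \<Rightarrow> int" where
  "deg G v = int (card {e \<in> G. v \<in> e})"

text \<open>k-graphs on [n] with degree sequence d (d only matters on [n]).\<close>
definition kgraphs_deg :: "nat \<Rightarrow> nat \<Rightarrow> (nat \<Rightarrow> int) \<Rightarrow> nat set set set" where
  "kgraphs_deg n k d = {G. G \<subseteq> ksub (verts n) k \<and> (\<forall>v \<in> verts n. deg G v = d v)}"

definition Ncount :: "nat \<Rightarrow> nat \<Rightarrow> (nat \<Rightarrow> int) \<Rightarrow> nat" where
  "Ncount n k d = card (kgraphs_deg n k d)"

definition kgraphical :: "nat \<Rightarrow> nat \<Rightarrow> (nat \<Rightarrow> int) \<Rightarrow> bool" where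
  "kgraphical n k d \<longleftrightarrow> Ncount n k d > 0"

text \<open>Indicator vector e_S; e_a is ev {a}.\<close>
definition ev :: "nat set \<Rightarrow> nat \<Rightarrow> int" where
  "ev S = (\<lambda>x. if x \<in> S then 1 else 0)"

definition Rab :: "nat \<Rightarrow> nat \<Rightarrow> nat \<Rightarrow> nat \<Rightarrow> (nat \<Rightarrow> int) \<Rightarrow> real" where
  "Rab n k a b d = real (Ncount n k (d - ev {a})) / real (Ncount n k (d - ev {b}))"

definition Pe :: "nat \<Rightarrow> nat \<Rightarrow> nat set \<Rightarrow> (nat \<Rightarrow> int) \<Rightarrow> real" where
  "Pe n k S d = real (card {G \<in> kgraphs_deg n k d. S \<in> G}) / real (Ncount n k d)"

definition Y :: "nat \<Rightarrow> nat \<Rightarrow> nat \<Rightarrow> nat set \<Rightarrow> nat \<Rightarrow> (nat \<Rightarrow> int) \<Rightarrow> real" where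
  "Y n k a K b d = (if a = b then 0 else
     real (card {G \<in> kgraphs_deg n k d. K \<union> {a} \<in> G \<and> K \<union> {b} \<in> G}) / real (Ncount n k d))"

text \<open>A-consistent ordering: as = A sorted; bs puts a_i where a_i \<in> B,
  and fills the remaining positions with B - A in increasing order.\<close>
fun fillB :: "nat set \<Rightarrow> nat list \<Rightarrow> nat list \<Rightarrow> nat list" where
  "fillB B [] ys = []"
| "fillB B (x # xs) ys = (if x \<in> B then x # fillB B xs ys else hd ys # fillB B xs (tl ys))"

definition cons_ord_A :: "nat set \<Rightarrow> nat list" where
  "cons_ord_A A = sorted_list_of_set A"

definition cons_ord_B :: "nat set \<Rightarrow> nat set \<Rightarrow> nat list" where
  "cons_ord_B A B = fillB B (sorted_list_of_set A) (sorted_list_of_set (B - A))"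

text \<open>R_{B,A}(d) via the product over the A-consistent ordering (0-indexed lists).\<close>
definition RBA :: "nat \<Rightarrow> nat \<Rightarrow> nat set \<Rightarrow> nat set \<Rightarrow> (nat \<Rightarrow> int) \<Rightarrow> real" where
  "RBA n k B A d = (let as = cons_ord_A A; bs = cons_ord_B A B in
     (\<Prod>j < k - 1. Rab n k (bs ! j) (as ! j)
        (d - ev (set (take j bs) \<union> set (drop (Suc j) as)))))"

text \<open>The quantity B(i,j,d') of part (a), for the fixed pair a,b and fixed d.\<close>
definition Bq :: "nat \<Rightarrow> nat \<Rightarrow> (nat \<Rightarrow> int) \<Rightarrow> nat \<Rightarrow> nat \<Rightarrow> nat \<Rightarrow> nat \<Rightarrow> (nat \<Rightarrow> int) \<Rightarrow> real" where
  "Bq n k d a b i j d' = (1 / real_of_int (d i)) *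
     ((\<Sum>K \<in> ksub (verts n - {a, b}) (k - 2). Pe n k (K \<union> {i, j}) d')
      + (\<Sum>K \<in> ksub (verts n - {a, b}) (k - 1). Y n k i K j d'))"

end

theory Submission
  imports Defs
begin


lemma finite_ksub: "finite S \<Longrightarrow> finite (ksub S m)"
  unfolding ksub_def by (rule finite_subset[of _ "Pow S"]) auto

lemma finite_kg: "finite (kgraphs_deg n k d)"
  unfolding kgraphs_deg_def
  by (rule finite_subset[of _ "Pow (ksub (verts n) k)"]) (auto simp: finite_ksub verts_def)

lemma kg_edge: "G \<in> kgraphs_deg n k d \<Longrightarrow> e \<in> G \<Longrightarrow> e \<subseteq> verts n \<and> card e = k"
  unfolding kgraphs_deg_def ksub_def by auto

lemma kg_finG: "G \<in> kgraphs_deg n k d \<Longrightarrow> finite G"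
  unfolding kgraphs_deg_def
  by (rule finite_subset[of _ "ksub (verts n) k"]) (auto simp: finite_ksub verts_def)

lemma kg_deg: "G \<in> kgraphs_deg n k d \<Longrightarrow> v \<in> verts n \<Longrightarrow> int (card {e\<in>G. v\<in>e}) = d v"
  unfolding kgraphs_deg_def deg_def by auto

lemma card_ins: "finite G \<Longrightarrow> int (card {f\<in>insert x G. P f}) = int (card {f\<in>G. P f}) + (if P x \<and> x \<notin> G then 1 else 0)"
proof -
  assume fG: "finite G"
  show ?thesis
  proof (cases "P x \<and> x \<notin> G")
    case True
    then have "{f\<in>insert x G. P f} = insert x {f\<in>G. P f}" by auto
    then show ?thesis using True fG by simp
  next
    case False
    then have "{f\<in>insert x G. P f} = {f\<in>G. P f}" by auto
    then show ?thesis using False by simp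
  qed
qed

lemma card_rem: "finite G \<Longrightarrow> int (card {f\<in>G - {x}. P f}) = int (card {f\<in>G. P f}) - (if P x \<and> x \<in> G then 1 else 0)"
proof -
  assume fG: "finite G"
  show ?thesis
  proof (cases "P x \<and> x \<in> G")
    case True
    then have e: "{f\<in>G - {x}. P f} = {f\<in>G. P f} - {x}" by auto
    have "x \<in> {f\<in>G. P f}" using True by auto
    have fin: "finite {f\<in>G. P f}" using fG by simp
    have pos: "card {f\<in>G. P f} \<ge> 1"
      using fin \<open>x \<in> {f\<in>G. P f}\<close> by (metis One_nat_def Suc_leI card_gt_0_iff empty_iff)
    have "card ({f\<in>G. P f} - {x}) = card {f\<in>G. P f} - 1"
      using fin \<open>x \<in> {f\<in>G. P f}\<close> by (simp add: card_Diff_singleton)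
    then show ?thesis using True e pos by (simp add: of_nat_diff)
  next
    case False
    then have "{f\<in>G - {x}. P f} = {f\<in>G. P f}" by auto
    then show ?thesis using False by simp
  qed
qed

lemma card_Pe: "real (card {G \<in> kgraphs_deg n k d. S \<in> G}) = Pe n k S d * real (Ncount n k d)"
proof (cases "Ncount n k d = 0")
  case True
  then have "kgraphs_deg n k d = {}" unfolding Ncount_def using finite_kg by auto
  then show ?thesis using True by simp
qed (simp add: Pe_def)

lemma card_Y: "a \<noteq> b \<Longrightarrow> real (card {G \<in> kgraphs_deg n k d. K \<union> {a} \<in> G \<and> K \<union> {b} \<in> G}) = Y n k a K b d * real (Ncount n k d)"
proof (cases "Ncount n k d = 0")
  case True
  then have "kgraphs_deg n k d = {}" unfolding Ncount_def using finite_kg by auto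
  then show ?thesis using True by simp
qed (simp add: Y_def)

lemma remove_edge:
  assumes S: "S \<in> ksub (verts n) k"
  shows "card {G \<in> kgraphs_deg n k d. S \<in> G \<and> Q G} = card {H \<in> kgraphs_deg n k (d - ev S). S \<notin> H \<and> Q (insert S H)}"
proof (rule bij_betw_same_card[of "\<lambda>G. G - {S}"], rule bij_betw_byWitness[where f'="insert S"])
  show "\<forall>G\<in>{G \<in> kgraphs_deg n k d. S \<in> G \<and> Q G}. insert S (G - {S}) = G" by auto
  show "\<forall>H\<in>{H \<in> kgraphs_deg n k (d - ev S). S \<notin> H \<and> Q (insert S H)}. insert S H - {S} = H" by auto
  show "(\<lambda>G. G - {S}) ` {G \<in> kgraphs_deg n k d. S \<in> G \<and> Q G} \<subseteq> {H \<in> kgraphs_deg n k (d - ev S). S \<notin> H \<and> Q (insert S H)}"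
  proof clarify
    fix G assume G: "G \<in> kgraphs_deg n k d" "S \<in> G" "Q G"
    have fG: "finite G" using kg_finG G(1) .
    have "G - {S} \<in> kgraphs_deg n k (d - ev S)"
      unfolding kgraphs_deg_def deg_def
    proof (intro CollectI conjI ballI)
      show "G - {S} \<subseteq> ksub (verts n) k" using G(1) unfolding kgraphs_deg_def by auto
      fix v assume v: "v \<in> verts n"
      show "int (card {e \<in> G - {S}. v \<in> e}) = (d - ev S) v"
        using card_rem[OF fG, of S "\<lambda>e. v \<in> e"] kg_deg[OF G(1) v] G(2) by (simp add: ev_def)
    qed
    moreover have "insert S (G - {S}) = G" using G(2) by auto
    ultimately show "G - {S} \<in> kgraphs_deg n k (d - ev S) \<and> S \<notin> G - {S} \<and> Q (insert S (G - {S}))"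
      using G(3) by auto
  qed
  show "insert S ` {H \<in> kgraphs_deg n k (d - ev S). S \<notin> H \<and> Q (insert S H)} \<subseteq> {G \<in> kgraphs_deg n k d. S \<in> G \<and> Q G}"
  proof clarify
    fix H assume H: "H \<in> kgraphs_deg n k (d - ev S)" "S \<notin> H" "Q (insert S H)"
    have fH: "finite H" using kg_finG H(1) .
    have "insert S H \<in> kgraphs_deg n k d"
      unfolding kgraphs_deg_def deg_def
    proof (intro CollectI conjI ballI)
      show "insert S H \<subseteq> ksub (verts n) k" using H(1) S unfolding kgraphs_deg_def by auto
      fix v assume v: "v \<in> verts n"
      show "int (card {e \<in> insert S H. v \<in> e}) = d v"
        using card_ins[OF fH, of S "\<lambda>e. v \<in> e"] kg_deg[OF H(1) v] H(2) by (simp add: ev_def)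
    qed
    then show "insert S H \<in> kgraphs_deg n k d \<and> S \<in> insert S H \<and> Q (insert S H)" using H(3) by auto
  qed
qed



lemma card_split: "finite X \<Longrightarrow> card {x\<in>X. Q x} = card {x\<in>X. P x \<and> Q x} + card {x\<in>X. \<not> P x \<and> Q x}"
proof -
  assume f: "finite X"
  have "{x\<in>X. Q x} = {x\<in>X. P x \<and> Q x} \<union> {x\<in>X. \<not> P x \<and> Q x}" by auto
  moreover have "{x\<in>X. P x \<and> Q x} \<inter> {x\<in>X. \<not> P x \<and> Q x} = {}" by auto
  ultimately show ?thesis using f by (simp add: card_Un_disjoint)
qed

lemma ksub_insert:
  assumes "K \<in> ksub (verts n) (k - 1)" "a \<in> verts n - K" "2 \<le> k"
  shows "K \<union> {a} \<in> ksub (verts n) k"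
proof -
  have "finite K" using assms(1) unfolding ksub_def verts_def by (auto intro: finite_subset)
  then show ?thesis using assms unfolding ksub_def by auto
qed

lemma part_c:
  assumes k: "2 \<le> k" and K: "K \<in> ksub (verts n) (k - 1)" and a: "a \<in> verts n - K" and b: "b \<in> verts n - K"
    and ab: "a \<noteq> b" and g: "kgraphical n k d" and lt: "Pe n k (K \<union> {a}) (d - ev (K \<union> {a})) < 1"
  shows "Y n k a K b d = Pe n k (K \<union> {a}) d / (1 - Pe n k (K \<union> {a}) (d - ev (K \<union> {a})))
        * (Pe n k (K \<union> {b}) (d - ev (K \<union> {a})) - Y n k a K b (d - ev (K \<union> {a})))"
proof -
  define S where "S = K \<union> {a}"
  define T where "T = K \<union> {b}"
  define d' where "d' = d - ev S"
  have S: "S \<in> ksub (verts n) k" unfolding S_def using ksub_insert[OF K a k] .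
  have ST: "S \<noteq> T" unfolding S_def T_def using a b ab by auto
  have c1: "card {G \<in> kgraphs_deg n k d. S \<in> G \<and> T \<in> G} = card {H \<in> kgraphs_deg n k d'. S \<notin> H \<and> T \<in> H}"
    using remove_edge[OF S, where d=d and Q="\<lambda>G. T \<in> G"] ST unfolding d'_def by simp
  have c2: "card {G \<in> kgraphs_deg n k d. S \<in> G} = card {H \<in> kgraphs_deg n k d'. S \<notin> H}"
    using remove_edge[OF S, where d=d and Q="\<lambda>G. True"] unfolding d'_def by simp
  have sp1: "card {H \<in> kgraphs_deg n k d'. T \<in> H} = card {H \<in> kgraphs_deg n k d'. S \<in> H \<and> T \<in> H} + card {H \<in> kgraphs_deg n k d'. S \<notin> H \<and> T \<in> H}"
    using card_split[OF finite_kg, where Q="\<lambda>H. T \<in> H" and P="\<lambda>H. S \<in> H"] .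
  have sp2: "Ncount n k d' = card {H \<in> kgraphs_deg n k d'. S \<in> H} + card {H \<in> kgraphs_deg n k d'. S \<notin> H}"
    using card_split[OF finite_kg, where Q="\<lambda>H. True" and P="\<lambda>H. S \<in> H"] unfolding Ncount_def by simp
  have eT: "real (card {H \<in> kgraphs_deg n k d'. T \<in> H}) = Pe n k T d' * real (Ncount n k d')" by (rule card_Pe)
  have eS: "real (card {H \<in> kgraphs_deg n k d'. S \<in> H}) = Pe n k S d' * real (Ncount n k d')" by (rule card_Pe)
  have eY: "real (card {H \<in> kgraphs_deg n k d'. S \<in> H \<and> T \<in> H}) = Y n k a K b d' * real (Ncount n k d')"
    using card_Y[OF ab, where n=n and k=k and K=K and d=d'] unfolding S_def T_def .
  have Yd: "Y n k a K b d = real (card {G \<in> kgraphs_deg n k d. S \<in> G \<and> T \<in> G}) / real (Ncount n k d)"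
    unfolding Y_def S_def T_def using ab by simp
  have Pd: "Pe n k S d = real (card {G \<in> kgraphs_deg n k d. S \<in> G}) / real (Ncount n k d)"
    unfolding Pe_def ..
  have lt': "Pe n k S d' < 1" using lt unfolding S_def d'_def .
  define N' where "N' = real (Ncount n k d')"
  define N where "N = real (Ncount n k d)"
  have r1: "real (card {H \<in> kgraphs_deg n k d'. S \<notin> H \<and> T \<in> H}) = (Pe n k T d' - Y n k a K b d') * N'"
    using arg_cong[OF sp1, of real] eT eY unfolding N'_def by (simp add: algebra_simps)
  have r2: "real (card {H \<in> kgraphs_deg n k d'. S \<notin> H}) = N' * (1 - Pe n k S d')"
    using arg_cong[OF sp2, of real] eS unfolding N'_def by (simp add: algebra_simps)
  have nz: "1 - Pe n k S d' \<noteq> 0" using lt' by simp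
  have "Pe n k S d / (1 - Pe n k S d') = N' / N"
    unfolding Pd c2 r2 N_def[symmetric] using nz by simp
  then have "Y n k a K b d = Pe n k S d / (1 - Pe n k S d') * (Pe n k T d' - Y n k a K b d')"
    unfolding Yd c1 r1 N_def[symmetric] by simp
  then show ?thesis unfolding S_def T_def d'_def .
qed



lemma fillB_len: "length (fillB B xs ys) = length xs"
  by (induction xs arbitrary: ys) auto

lemma fillB_set: "length ys = length (filter (\<lambda>x. x \<notin> B) xs) \<Longrightarrow> set (fillB B xs ys) = (set xs \<inter> B) \<union> set ys"
proof (induction xs arbitrary: ys)
  case Nil then show ?case by simp
next
  case (Cons x xs)
  show ?case
  proof (cases "x \<in> B")
    case True then show ?thesis using Cons by auto
  next
    case False
    then obtain y ys' where ys: "ys = y # ys'" using Cons.prems by (cases ys) auto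
    then show ?thesis using Cons False by auto
  qed
qed

lemma fillB_distinct: "length ys = length (filter (\<lambda>x. x \<notin> B) xs) \<Longrightarrow> distinct xs \<Longrightarrow> distinct ys
   \<Longrightarrow> set ys \<inter> set xs = {} \<Longrightarrow> distinct (fillB B xs ys)"
proof (induction xs arbitrary: ys)
  case Nil then show ?case by simp
next
  case (Cons x xs)
  show ?case
  proof (cases "x \<in> B")
    case True then show ?thesis using Cons fillB_set[of ys B xs] by auto
  next
    case False
    then obtain y ys' where ys: "ys = y # ys'" using Cons.prems by (cases ys) auto
    then show ?thesis using Cons False fillB_set[of ys' B xs] by auto
  qed
qed

lemma fillB_nth: "length ys = length (filter (\<lambda>x. x \<notin> B) xs) \<Longrightarrow> i < length xs \<Longrightarrow>
   fillB B xs ys ! i = xs ! i \<or> fillB B xs ys ! i \<in> set ys"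
proof (induction xs arbitrary: ys i)
  case Nil then show ?case by simp
next
  case (Cons x xs)
  show ?case
  proof (cases "x \<in> B")
    case True then show ?thesis using Cons by (cases i) auto
  next
    case False
    then obtain y ys' where ys: "ys = y # ys'" using Cons.prems by (cases ys) auto
    then show ?thesis using Cons False by (cases i) auto
  qed
qed

lemma ev_insert: "x \<notin> Z \<Longrightarrow> d - ev Z - ev {x} = d - ev (insert x Z)"
  by (auto simp: fun_eq_iff ev_def)

lemma prod_telescope:
  fixes f :: "nat \<Rightarrow> real"
  shows "(\<forall>j\<le>m. f j \<noteq> 0) \<Longrightarrow> (\<Prod>j<m. f (Suc j) / f j) = f m / f 0"
  by (induction m) auto

lemma RBA_eq:
  assumes fA: "finite A" and fB: "finite B" and cA: "card A = k - 1" and cB: "card B = k - 1"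
    and g: "\<forall>j \<le> k - 1. kgraphical n k (d - ev (set (take j (cons_ord_B A B)) \<union> set (drop j (cons_ord_A A))))"
  shows "RBA n k B A d = real (Ncount n k (d - ev B)) / real (Ncount n k (d - ev A))"
proof -
  define as where "as = cons_ord_A A"
  define ys where "ys = sorted_list_of_set (B - A)"
  define bs where "bs = cons_ord_B A B"
  have bs_def': "bs = fillB B as ys" unfolding bs_def cons_ord_B_def as_def cons_ord_A_def ys_def ..
  have as_set: "set as = A" and as_dist: "distinct as" and as_len: "length as = k - 1"
    unfolding as_def cons_ord_A_def using fA cA by auto
  have ys_set: "set ys = B - A" and ys_dist: "distinct ys" unfolding ys_def using fB by auto
  have "length (filter (\<lambda>x. x \<notin> B) as) = card (A - B)"
    using as_dist as_set by (metis distinct_card distinct_filter set_filter set_diff_eq)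
  moreover have "card (A - B) = card (B - A)"
    using fA fB cA cB by (metis Int_commute card_Diff_subset_Int finite_Int)
  moreover have "length ys = card (B - A)" unfolding ys_def by simp
  ultimately have L: "length ys = length (filter (\<lambda>x. x \<notin> B) as)" by simp
  have bs_len: "length bs = k - 1" unfolding bs_def' using fillB_len as_len by simp
  have bs_set: "set bs = B" unfolding bs_def' using fillB_set[OF L] as_set ys_set by auto
  have bs_dist: "distinct bs" unfolding bs_def' using fillB_distinct[OF L as_dist ys_dist] ys_set as_set by auto
  have bs_nth: "\<And>i. i < k - 1 \<Longrightarrow> bs ! i = as ! i \<or> bs ! i \<notin> A"
    unfolding bs_def' using fillB_nth[OF L] as_len ys_set by fastforce
  define X where "X j = set (take j bs) \<union> set (drop j as)" for j
  define f where "f j = real (Ncount n k (d - ev (X j)))" for j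
  have fnz: "\<forall>j\<le>k-1. f j \<noteq> 0" using g unfolding f_def X_def kgraphical_def bs_def as_def by auto
  have step: "Rab n k (bs ! j) (as ! j) (d - ev (set (take j bs) \<union> set (drop (Suc j) as))) = f (Suc j) / f j"
    if j: "j < k - 1" for j
  proof -
    define Z where "Z = set (take j bs) \<union> set (drop (Suc j) as)"
    have a1: "as ! j \<notin> set (take j bs)"
    proof
      assume "as ! j \<in> set (take j bs)"
      then obtain i where i: "i < j" "bs ! i = as ! j" using j bs_len by (auto simp: in_set_conv_nth)
      have "as ! j \<in> A" using j as_len as_set by auto
      then have "bs ! i = as ! i" using bs_nth[of i] i j by auto
      then show False using i j as_dist as_len by (simp add: nth_eq_iff_index_eq)
    qed
    have ad: "as ! j # drop (Suc j) as = drop j as" using j as_len by (simp add: Cons_nth_drop_Suc)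
    have a2: "as ! j \<notin> set (drop (Suc j) as)" using as_dist ad by (metis distinct.simps(2) distinct_drop)
    have bt: "take (Suc j) bs = take j bs @ [bs ! j]" using j bs_len by (simp add: take_Suc_conv_app_nth)
    have b1: "bs ! j \<notin> set (take j bs)" using bs_dist bt by (metis distinct_take distinct_append not_distinct_conv_prefix distinct.simps(2) set_ConsD)
    have b2: "bs ! j \<notin> set (drop (Suc j) as)"
      using bs_nth[OF j] a2 as_set by (metis in_set_dropD)
    have XS: "X (Suc j) = insert (bs ! j) Z" unfolding X_def Z_def using bt by auto
    have Xj: "X j = insert (as ! j) Z" unfolding X_def Z_def using ad[symmetric] by auto
    show ?thesis unfolding Rab_def f_def Z_def[symmetric] XS Xj
      using ev_insert[of "bs ! j" Z d] ev_insert[of "as ! j" Z d] a1 a2 b1 b2 unfolding Z_def by auto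
  qed
  have "RBA n k B A d = (\<Prod>j<k-1. f (Suc j) / f j)"
    unfolding RBA_def Let_def as_def[symmetric] bs_def[symmetric] using step by simp
  also have "\<dots> = f (k - 1) / f 0" using prod_telescope fnz by blast
  moreover have "X (k - 1) = B" unfolding X_def using bs_len as_len bs_set by simp
  moreover have "X 0 = A" unfolding X_def using as_set by simp
  ultimately show ?thesis unfolding f_def by simp
qed



lemma card_as_sum: "finite Yy \<Longrightarrow> card {y\<in>Yy. R y} = (\<Sum>y\<in>Yy. if R y then 1 else 0)"
  using sum.inter_filter[of Yy "\<lambda>_. 1::nat" R] by simp

lemma sum_card_swap:
  assumes "finite X" "finite Yy"
  shows "(\<Sum>x\<in>X. card {y\<in>Yy. R x y}) = (\<Sum>y\<in>Yy. card {x\<in>X. R x y})"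
proof -
  have "(\<Sum>x\<in>X. card {y\<in>Yy. R x y}) = (\<Sum>x\<in>X. \<Sum>y\<in>Yy. if R x y then 1 else 0)"
    using assms(2) by (simp add: card_as_sum)
  also have "\<dots> = (\<Sum>y\<in>Yy. \<Sum>x\<in>X. if R x y then 1 else 0)" by (rule sum.swap)
  also have "\<dots> = (\<Sum>y\<in>Yy. card {x\<in>X. R x y})" using assms(1) by (simp add: card_as_sum)
  finally show ?thesis .
qed

lemma link_card:
  assumes G: "G \<in> kgraphs_deg n k d" and k: "1 \<le> k" and v: "v \<in> verts n"
  shows "card {B \<in> ksub (verts n - {v}) (k - 1). B \<union> {v} \<in> G} = card {e\<in>G. v\<in>e}"
proof (rule bij_betw_same_card[of "\<lambda>B. insert v B"], rule bij_betw_byWitness[where f'="\<lambda>e. e - {v}"])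
  show "\<forall>B\<in>{B \<in> ksub (verts n - {v}) (k - 1). B \<union> {v} \<in> G}. insert v B - {v} = B"
    unfolding ksub_def by auto
  show "\<forall>e\<in>{e \<in> G. v \<in> e}. insert v (e - {v}) = e" by auto
  show "insert v ` {B \<in> ksub (verts n - {v}) (k - 1). B \<union> {v} \<in> G} \<subseteq> {e \<in> G. v \<in> e}" by auto
  show "(\<lambda>e. e - {v}) ` {e \<in> G. v \<in> e} \<subseteq> {B \<in> ksub (verts n - {v}) (k - 1). B \<union> {v} \<in> G}"
  proof clarify
    fix e assume e: "e \<in> G" "v \<in> e"
    have "e \<subseteq> verts n" "card e = k" using kg_edge[OF G e(1)] by auto
    moreover have "finite e" using \<open>e \<subseteq> verts n\<close> unfolding verts_def by (auto intro: finite_subset)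
    ultimately have "e - {v} \<in> ksub (verts n - {v}) (k - 1)" unfolding ksub_def using e(2) by auto
    moreover have "e - {v} \<union> {v} = e" using e(2) by auto
    ultimately show "e - {v} \<in> ksub (verts n - {v}) (k - 1) \<and> e - {v} \<union> {v} \<in> G" using e(1) by auto
  qed
qed

lemma deg_sum:
  assumes k: "1 \<le> k" and v: "v \<in> verts n"
  shows "(\<Sum>B \<in> ksub (verts n - {v}) (k - 1). real (card {G \<in> kgraphs_deg n k d. B \<union> {v} \<in> G}))
    = real (Ncount n k d) * real_of_int (d v)"
proof -
  have fK: "finite (ksub (verts n - {v}) (k - 1))" by (rule finite_ksub) (simp add: verts_def)
  have "(\<Sum>B \<in> ksub (verts n - {v}) (k - 1). card {G \<in> kgraphs_deg n k d. B \<union> {v} \<in> G})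
      = (\<Sum>G \<in> kgraphs_deg n k d. card {B \<in> ksub (verts n - {v}) (k - 1). B \<union> {v} \<in> G})"
    by (rule sum_card_swap[OF fK finite_kg])
  also have "\<dots> = (\<Sum>G \<in> kgraphs_deg n k d. card {e\<in>G. v\<in>e})"
    using link_card[OF _ k v] by simp
  finally have "real_of_int (int (\<Sum>B \<in> ksub (verts n - {v}) (k - 1). card {G \<in> kgraphs_deg n k d. B \<union> {v} \<in> G}))
     = real_of_int (\<Sum>G \<in> kgraphs_deg n k d. int (card {e\<in>G. v\<in>e}))" by simp
  also have "(\<Sum>G \<in> kgraphs_deg n k d. int (card {e\<in>G. v\<in>e})) = (\<Sum>G \<in> kgraphs_deg n k d. d v)"
    using kg_deg[OF _ v] by simp
  finally show ?thesis unfolding Ncount_def by simp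
qed

lemma edge_count:
  assumes S: "S \<in> ksub (verts n) k"
  shows "real (card {G \<in> kgraphs_deg n k d. S \<in> G}) = real (Ncount n k (d - ev S)) * (1 - Pe n k S (d - ev S))"
proof -
  have c2: "card {G \<in> kgraphs_deg n k d. S \<in> G} = card {H \<in> kgraphs_deg n k (d - ev S). S \<notin> H}"
    using remove_edge[OF S, where d=d and Q="\<lambda>G. True"] by simp
  have sp2: "Ncount n k (d - ev S) = card {H \<in> kgraphs_deg n k (d - ev S). S \<in> H} + card {H \<in> kgraphs_deg n k (d - ev S). S \<notin> H}"
    using card_split[OF finite_kg, where Q="\<lambda>H. True" and P="\<lambda>H. S \<in> H"] unfolding Ncount_def by simp
  show ?thesis using c2 arg_cong[OF sp2, of real] card_Pe[of n k "d - ev S" S] by (simp add: algebra_simps)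
qed



lemma ev_union_v: "v \<notin> B \<Longrightarrow> d - ev {v} - ev B = d - ev (B \<union> {v})"
  by (auto simp: fun_eq_iff ev_def)

lemma part_b:
  assumes k: "2 \<le> k" and A: "A \<in> ksub (verts n) (k - 1)" and v: "v \<in> verts n - A"
    and pos: "Pe n k (A \<union> {v}) d > 0"
    and g: "\<forall>B \<in> ksub (verts n - {v}) (k - 1). \<forall>j \<le> k - 1.
           kgraphical n k (d - ev {v} - ev (set (take j (cons_ord_B A B)) \<union> set (drop j (cons_ord_A A))))"
  shows "Pe n k (A \<union> {v}) d = real_of_int (d v) * inverse
        (\<Sum>B \<in> ksub (verts n - {v}) (k - 1).
           RBA n k B A (d - ev {v}) *
           ((1 - Pe n k (B \<union> {v}) (d - ev (B \<union> {v})))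
            / (1 - Pe n k (A \<union> {v}) (d - ev (A \<union> {v})))))"
proof -
  define KS where "KS = ksub (verts n - {v}) (k - 1)"
  define c where "c B = real (card {G \<in> kgraphs_deg n k d. B \<union> {v} \<in> G})" for B
  define N where "N = real (Ncount n k d)"
  have fin: "finite (verts n)" unfolding verts_def by simp
  have AK: "A \<in> KS" using A v unfolding KS_def ksub_def by auto
  have fA: "finite A" using A fin unfolding ksub_def by (auto intro: finite_subset)
  have cA_: "card A = k - 1" using A unfolding ksub_def by auto
  have Pd: "Pe n k (A \<union> {v}) d = c A / N" unfolding Pe_def c_def N_def ..
  have Npos: "N > 0" using pos Pd by (cases "N = 0") (auto simp: N_def)
  have cpos: "c A > 0" using pos Npos Pd by (simp add: zero_less_divide_iff)
  have ce: "c B = real (Ncount n k (d - ev (B \<union> {v}))) * (1 - Pe n k (B \<union> {v}) (d - ev (B \<union> {v})))"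
    if "B \<in> KS" for B
  proof -
    have "B \<union> {v} \<in> ksub (verts n) k" using ksub_insert[of B n k v] that k v unfolding KS_def ksub_def by auto
    then show ?thesis unfolding c_def by (rule edge_count)
  qed
  have cAnz: "real (Ncount n k (d - ev (A \<union> {v}))) \<noteq> 0" "1 - Pe n k (A \<union> {v}) (d - ev (A \<union> {v})) \<noteq> 0"
  proof -
    have "real (Ncount n k (d - ev (A \<union> {v}))) * (1 - Pe n k (A \<union> {v}) (d - ev (A \<union> {v}))) \<noteq> 0"
      using ce[OF AK] cpos by linarith
    then show "real (Ncount n k (d - ev (A \<union> {v}))) \<noteq> 0" "1 - Pe n k (A \<union> {v}) (d - ev (A \<union> {v})) \<noteq> 0"
      by auto
  qed
  have termB: "RBA n k B A (d - ev {v}) * ((1 - Pe n k (B \<union> {v}) (d - ev (B \<union> {v})))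
            / (1 - Pe n k (A \<union> {v}) (d - ev (A \<union> {v})))) = c B / c A" if B: "B \<in> KS" for B
  proof -
    have fB: "finite B" using B fin unfolding KS_def ksub_def by (auto intro: finite_subset)
    have cB_: "card B = k - 1" "v \<notin> B" using B unfolding KS_def ksub_def by auto
    have "RBA n k B A (d - ev {v}) = real (Ncount n k (d - ev {v} - ev B)) / real (Ncount n k (d - ev {v} - ev A))"
      using RBA_eq[OF fA fB cA_ cB_(1)] g B unfolding KS_def by blast
    also have "\<dots> = real (Ncount n k (d - ev (B \<union> {v}))) / real (Ncount n k (d - ev (A \<union> {v})))"
      using ev_union_v[of v B d] ev_union_v[of v A d] cB_(2) v by simp
    finally have R: "RBA n k B A (d - ev {v}) = real (Ncount n k (d - ev (B \<union> {v}))) / real (Ncount n k (d - ev (A \<union> {v})))" .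
    show ?thesis unfolding ce[OF B] ce[OF AK] R by simp
  qed
  have S: "(\<Sum>B \<in> KS. c B) = N * real_of_int (d v)"
    unfolding c_def N_def KS_def using deg_sum[of k v n d] k v by simp
  have fKS: "finite KS" unfolding KS_def using fin by (simp add: finite_ksub)
  have "c A \<le> (\<Sum>B \<in> KS. c B)" using AK fKS by (intro member_le_sum) (auto simp: c_def)
  then have dpos: "real_of_int (d v) > 0" using S cpos Npos by (metis zero_less_mult_iff less_le_trans not_less_iff_gr_or_eq)
  have "(\<Sum>B \<in> KS. RBA n k B A (d - ev {v}) * ((1 - Pe n k (B \<union> {v}) (d - ev (B \<union> {v})))
            / (1 - Pe n k (A \<union> {v}) (d - ev (A \<union> {v}))))) = (\<Sum>B \<in> KS. c B) / c A"
    using termB by (simp add: sum_divide_distrib)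
  also have "\<dots> = N * real_of_int (d v) / c A" using S by simp
  finally have E: "(\<Sum>B \<in> KS. RBA n k B A (d - ev {v}) * ((1 - Pe n k (B \<union> {v}) (d - ev (B \<union> {v})))
            / (1 - Pe n k (A \<union> {v}) (d - ev (A \<union> {v}))))) = N * real_of_int (d v) / c A" .
  show ?thesis unfolding KS_def[symmetric] E Pd using dpos Npos cpos by (simp add: field_simps)
qed



definition sw :: "nat \<Rightarrow> nat \<Rightarrow> nat set \<Rightarrow> nat set" where
  "sw a b e = insert b (e - {a})"

definition Pab :: "nat \<Rightarrow> nat \<Rightarrow> (nat \<Rightarrow> int) \<Rightarrow> nat \<Rightarrow> nat \<Rightarrow> (nat set set \<times> nat set) set" where
  "Pab n k d a b = (SIGMA G: kgraphs_deg n k (d - ev {b}). {e\<in>G. a \<in> e \<and> b \<notin> e \<and> sw a b e \<notin> G})"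

definition phi :: "nat \<Rightarrow> nat \<Rightarrow> nat set set \<times> nat set \<Rightarrow> nat set set \<times> nat set" where
  "phi a b x = (insert (sw a b (snd x)) (fst x - {snd x}), sw a b (snd x))"

lemma phi_inv: "x \<in> Pab n k d a b \<Longrightarrow> phi b a (phi a b x) = x"
  unfolding Pab_def phi_def sw_def by (cases x) (auto simp: insert_absorb)

lemma phi_in:
  assumes a: "a \<in> verts n" and b: "b \<in> verts n" and ab: "a \<noteq> b" and x: "x \<in> Pab n k d a b"
  shows "phi a b x \<in> Pab n k d b a"
proof -
  obtain G e where xe: "x = (G, e)" by (cases x)
  have G: "G \<in> kgraphs_deg n k (d - ev {b})" and e: "e \<in> G" "a \<in> e" "b \<notin> e" "sw a b e \<notin> G"
    using x unfolding xe Pab_def by auto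
  define e' where "e' = sw a b e"
  have fG: "finite G" using kg_finG[OF G] .
  have ee: "e \<subseteq> verts n" "card e = k" using kg_edge[OF G e(1)] by auto
  have fe: "finite e" using ee(1) unfolding verts_def by (auto intro: finite_subset)
  have e'k: "e' \<in> ksub (verts n) k" unfolding e'_def sw_def ksub_def using ee fe e b
    by (auto simp: card_Diff_singleton) (metis One_nat_def Suc_pred card_gt_0_iff empty_iff)
  have e'G: "e' \<notin> G" using e(4) unfolding e'_def .
  have ne: "e \<noteq> e'" using e unfolding e'_def sw_def by auto
  define H where "H = insert e' (G - {e})"
  have fG': "finite (G - {e})" using fG by simp
  have H: "H \<in> kgraphs_deg n k (d - ev {a})"
    unfolding kgraphs_deg_def deg_def
  proof (intro CollectI conjI ballI)
    show "H \<subseteq> ksub (verts n) k" using G e'k unfolding H_def kgraphs_deg_def by auto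
    fix v assume v: "v \<in> verts n"
    have "int (card {f \<in> H. v \<in> f}) = int (card {f \<in> G - {e}. v \<in> f}) + (if v \<in> e' then 1 else 0)"
      unfolding H_def using card_ins[OF fG', of e' "\<lambda>f. v \<in> f"] e'G by simp
    also have "\<dots> = int (card {f \<in> G. v \<in> f}) - (if v \<in> e then 1 else 0) + (if v \<in> e' then 1 else 0)"
      using card_rem[OF fG, of e "\<lambda>f. v \<in> f"] e(1) by simp
    also have "\<dots> = (d - ev {a}) v"
      using kg_deg[OF G v] e(2,3) ab unfolding e'_def sw_def by (auto simp: ev_def)
    finally show "int (card {f \<in> H. v \<in> f}) = (d - ev {a}) v" .
  qed
  have "e' \<in> H" "b \<in> e'" "a \<notin> e'" "sw b a e' \<notin> H"
    unfolding H_def e'_def sw_def using e ab by (auto simp: insert_absorb)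
  then show ?thesis using H unfolding xe phi_def Pab_def H_def e'_def by auto
qed

lemma card_Pab_sym:
  assumes a: "a \<in> verts n" and b: "b \<in> verts n" and ab: "a \<noteq> b"
  shows "card (Pab n k d a b) = card (Pab n k d b a)"
  apply (rule bij_betw_same_card[of "phi a b"], rule bij_betw_byWitness[where f'="phi b a"])
  using phi_inv phi_in a b ab by blast+

lemma bij1:
  assumes G: "G \<in> kgraphs_deg n k d'" and a: "a \<in> verts n" and b: "b \<in> verts n" and ab: "a \<noteq> b"
  shows "card {e\<in>G. b \<in> e \<and> a \<in> e} = card {K \<in> ksub (verts n - {a,b}) (k - 2). K \<union> {a,b} \<in> G}"
proof (rule bij_betw_same_card[of "\<lambda>e. e - {a,b}"], rule bij_betw_byWitness[where f'="\<lambda>K. K \<union> {a,b}"])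
  show "\<forall>e\<in>{e \<in> G. b \<in> e \<and> a \<in> e}. e - {a, b} \<union> {a, b} = e" by auto
  show "\<forall>K\<in>{K \<in> ksub (verts n - {a, b}) (k - 2). K \<union> {a, b} \<in> G}. K \<union> {a, b} - {a, b} = K"
    unfolding ksub_def by auto
  show "(\<lambda>K. K \<union> {a, b}) ` {K \<in> ksub (verts n - {a, b}) (k - 2). K \<union> {a, b} \<in> G} \<subseteq> {e \<in> G. b \<in> e \<and> a \<in> e}"
    by auto
  show "(\<lambda>e. e - {a, b}) ` {e \<in> G. b \<in> e \<and> a \<in> e} \<subseteq> {K \<in> ksub (verts n - {a, b}) (k - 2). K \<union> {a, b} \<in> G}"
  proof clarify
    fix e assume e: "e \<in> G" "b \<in> e" "a \<in> e"
    have ee: "e \<subseteq> verts n" "card e = k" using kg_edge[OF G e(1)] by auto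
    have fe: "finite e" using ee(1) unfolding verts_def by (auto intro: finite_subset)
    have "card (e - {a,b}) = k - 2" using ee fe e ab by (simp add: card_Diff_subset)
    then have "e - {a,b} \<in> ksub (verts n - {a, b}) (k - 2)" using ee unfolding ksub_def by auto
    moreover have "e - {a,b} \<union> {a,b} = e" using e by auto
    ultimately show "e - {a, b} \<in> ksub (verts n - {a, b}) (k - 2) \<and> e - {a, b} \<union> {a, b} \<in> G" using e by auto
  qed
qed

lemma bij2:
  assumes G: "G \<in> kgraphs_deg n k d'" and a: "a \<in> verts n" and b: "b \<in> verts n" and ab: "a \<noteq> b"
  shows "card {e\<in>G. sw a b e \<in> G \<and> (b \<notin> e \<and> a \<in> e)} = card {K \<in> ksub (verts n - {a,b}) (k - 1). K \<union> {a} \<in> G \<and> K \<union> {b} \<in> G}"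
proof (rule bij_betw_same_card[of "\<lambda>e. e - {a}"], rule bij_betw_byWitness[where f'="\<lambda>K. K \<union> {a}"])
  show "\<forall>e\<in>{e\<in>G. sw a b e \<in> G \<and> (b \<notin> e \<and> a \<in> e)}. e - {a} \<union> {a} = e" by auto
  show "\<forall>K\<in>{K \<in> ksub (verts n - {a,b}) (k - 1). K \<union> {a} \<in> G \<and> K \<union> {b} \<in> G}. K \<union> {a} - {a} = K"
    unfolding ksub_def by auto
  show "(\<lambda>K. K \<union> {a}) ` {K \<in> ksub (verts n - {a,b}) (k - 1). K \<union> {a} \<in> G \<and> K \<union> {b} \<in> G} \<subseteq> {e\<in>G. sw a b e \<in> G \<and> (b \<notin> e \<and> a \<in> e)}"
  proof (rule image_subsetI)
    fix K assume "K \<in> {K \<in> ksub (verts n - {a,b}) (k - 1). K \<union> {a} \<in> G \<and> K \<union> {b} \<in> G}"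
    then have K: "K \<in> ksub (verts n - {a,b}) (k - 1)" "K \<union> {a} \<in> G" "K \<union> {b} \<in> G" by auto
    have "a \<notin> K" "b \<notin> K" using K(1) unfolding ksub_def by auto
    then have "sw a b (K \<union> {a}) = K \<union> {b}" unfolding sw_def by auto
    then show "K \<union> {a} \<in> {e\<in>G. sw a b e \<in> G \<and> (b \<notin> e \<and> a \<in> e)}"
      using K \<open>b \<notin> K\<close> ab by auto
  qed
  show "(\<lambda>e. e - {a}) ` {e\<in>G. sw a b e \<in> G \<and> (b \<notin> e \<and> a \<in> e)} \<subseteq> {K \<in> ksub (verts n - {a,b}) (k - 1). K \<union> {a} \<in> G \<and> K \<union> {b} \<in> G}"
  proof clarify
    fix e assume e: "e \<in> G" "sw a b e \<in> G" "b \<notin> e" "a \<in> e"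
    have ee: "e \<subseteq> verts n" "card e = k" using kg_edge[OF G e(1)] by auto
    have fe: "finite e" using ee(1) unfolding verts_def by (auto intro: finite_subset)
    have "card (e - {a}) = k - 1" using ee fe e by (simp add: card_Diff_singleton)
    then have "e - {a} \<in> ksub (verts n - {a, b}) (k - 1)" using ee e unfolding ksub_def by auto
    moreover have "e - {a} \<union> {a} = e" using e by auto
    moreover have "e - {a} \<union> {b} = sw a b e" unfolding sw_def by auto
    ultimately show "e - {a} \<in> ksub (verts n - {a, b}) (k - 1) \<and> e - {a} \<union> {a} \<in> G \<and> e - {a} \<union> {b} \<in> G" using e by auto
  qed
qed



lemma count_Pab:
  assumes a: "a \<in> verts n" and b: "b \<in> verts n" and ab: "a \<noteq> b"
  shows "real (card (Pab n k d a b)) = real (Ncount n k (d - ev {b})) *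
    (real_of_int (d a) - ((\<Sum>K \<in> ksub (verts n - {a, b}) (k - 2). Pe n k (K \<union> {a, b}) (d - ev {b}))
      + (\<Sum>K \<in> ksub (verts n - {a, b}) (k - 1). Y n k a K b (d - ev {b}))))"
proof -
  define D where "D = kgraphs_deg n k (d - ev {b})"
  define KS2 where "KS2 = ksub (verts n - {a, b}) (k - 2)"
  define KS1 where "KS1 = ksub (verts n - {a, b}) (k - 1)"
  define c1 where "c1 G = card {K \<in> KS2. K \<union> {a,b} \<in> G}" for G
  define c2 where "c2 G = card {K \<in> KS1. K \<union> {a} \<in> G \<and> K \<union> {b} \<in> G}" for G
  have fD: "finite D" unfolding D_def by (rule finite_kg)
  have fKS2: "finite KS2" unfolding KS2_def by (rule finite_ksub) (simp add: verts_def)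
  have fKS1: "finite KS1" unfolding KS1_def by (rule finite_ksub) (simp add: verts_def)
  have per: "real (card {e\<in>G. a \<in> e \<and> b \<notin> e \<and> sw a b e \<notin> G}) = real_of_int (d a) - real (c1 G) - real (c2 G)"
    if G: "G \<in> D" for G
  proof -
    have fG: "finite G" using kg_finG G unfolding D_def by blast
    have s1: "card {e\<in>G. a \<in> e} = card {e\<in>G. b \<in> e \<and> a \<in> e} + card {e\<in>G. \<not> b \<in> e \<and> a \<in> e}"
      using card_split[OF fG, where Q="\<lambda>e. a \<in> e" and P="\<lambda>e. b \<in> e"] .
    have s2: "card {e\<in>G. \<not> b \<in> e \<and> a \<in> e} = card {e\<in>G. sw a b e \<in> G \<and> (\<not> b \<in> e \<and> a \<in> e)} + card {e\<in>G. \<not> sw a b e \<in> G \<and> (\<not> b \<in> e \<and> a \<in> e)}"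
      using card_split[OF fG, where Q="\<lambda>e. \<not> b \<in> e \<and> a \<in> e" and P="\<lambda>e. sw a b e \<in> G"] .
    have eq: "{e\<in>G. a \<in> e \<and> b \<notin> e \<and> sw a b e \<notin> G} = {e\<in>G. \<not> sw a b e \<in> G \<and> (\<not> b \<in> e \<and> a \<in> e)}" by auto
    have dg: "int (card {e\<in>G. a \<in> e}) = d a" using kg_deg[OF G[unfolded D_def] a] ab by (simp add: ev_def)
    have b1: "card {e\<in>G. b \<in> e \<and> a \<in> e} = c1 G" unfolding c1_def KS2_def using bij1[OF G[unfolded D_def] a b ab] .
    have b2: "card {e\<in>G. sw a b e \<in> G \<and> (\<not> b \<in> e \<and> a \<in> e)} = c2 G" unfolding c2_def KS1_def using bij2[OF G[unfolded D_def] a b ab] .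
    have "real_of_int (d a) = real (c1 G) + real (c2 G) + real (card {e\<in>G. a \<in> e \<and> b \<notin> e \<and> sw a b e \<notin> G})"
      using arg_cong[OF dg[symmetric], of real_of_int] s1 s2 b1 b2 eq by simp
    then show ?thesis by simp
  qed
  have "card (Pab n k d a b) = (\<Sum>G\<in>D. card {e\<in>G. a \<in> e \<and> b \<notin> e \<and> sw a b e \<notin> G})"
    unfolding Pab_def D_def[symmetric] using fD by (subst card_SigmaI) (auto dest: kg_finG simp: D_def)
  then have "real (card (Pab n k d a b)) = (\<Sum>G\<in>D. real_of_int (d a) - real (c1 G) - real (c2 G))"
    using per by simp
  also have "\<dots> = real (card D) * real_of_int (d a) - real (\<Sum>G\<in>D. c1 G) - real (\<Sum>G\<in>D. c2 G)"
    by (simp add: sum_subtractf)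
  also have "(\<Sum>G\<in>D. c1 G) = (\<Sum>K\<in>KS2. card {G\<in>D. K \<union> {a,b} \<in> G})"
    unfolding c1_def by (rule sum_card_swap[OF fD fKS2])
  also have "(\<Sum>G\<in>D. c2 G) = (\<Sum>K\<in>KS1. card {G\<in>D. K \<union> {a} \<in> G \<and> K \<union> {b} \<in> G})"
    unfolding c2_def by (rule sum_card_swap[OF fD fKS1])
  finally have "real (card (Pab n k d a b)) = real (card D) * real_of_int (d a)
     - (\<Sum>K\<in>KS2. real (card {G\<in>D. K \<union> {a,b} \<in> G})) - (\<Sum>K\<in>KS1. real (card {G\<in>D. K \<union> {a} \<in> G \<and> K \<union> {b} \<in> G}))"
    by simp
  also have "(\<Sum>K\<in>KS2. real (card {G\<in>D. K \<union> {a,b} \<in> G})) = (\<Sum>K\<in>KS2. Pe n k (K \<union> {a,b}) (d - ev {b}) * real (card D))"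
    unfolding D_def using card_Pe by (simp add: Ncount_def)
  also have "(\<Sum>K\<in>KS1. real (card {G\<in>D. K \<union> {a} \<in> G \<and> K \<union> {b} \<in> G})) = (\<Sum>K\<in>KS1. Y n k a K b (d - ev {b}) * real (card D))"
    unfolding D_def using card_Y[OF ab] by (simp add: Ncount_def)
  finally show ?thesis unfolding KS1_def[symmetric] KS2_def[symmetric] Ncount_def D_def[symmetric]
    by (simp add: sum_distrib_left sum_distrib_right algebra_simps fun_diff_def)
qed



lemma deg_pos:
  assumes a: "a \<in> verts n" and g: "kgraphical n k (d - ev {a})"
  shows "d a \<ge> 1"
proof -
  have "kgraphs_deg n k (d - ev {a}) \<noteq> {}" using g unfolding kgraphical_def Ncount_def by auto
  then obtain G where G: "G \<in> kgraphs_deg n k (d - ev {a})" by auto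
  have "int (card {e\<in>G. a \<in> e}) = d a - 1" using kg_deg[OF G a] by (simp add: ev_def)
  then show ?thesis by linarith
qed

lemma part_a:
  assumes a: "a \<in> verts n" and b: "b \<in> verts n" and ga: "kgraphical n k (d - ev {a})"
    and gb: "kgraphical n k (d - ev {b})" and lt: "Bq n k d a b b a (d - ev {a}) < 1"
  shows "Rab n k a b d = (real_of_int (d a) / real_of_int (d b)) *
        ((1 - Bq n k d a b a b (d - ev {b})) / (1 - Bq n k d a b b a (d - ev {a})))"
proof -
  have da: "real_of_int (d a) > 0" using deg_pos[OF a ga] by simp
  have db: "real_of_int (d b) > 0" using deg_pos[OF b gb] by simp
  have Nb: "real (Ncount n k (d - ev {b})) > 0" using gb unfolding kgraphical_def by simp
  have lt': "1 - Bq n k d a b b a (d - ev {a}) > 0" using lt by simp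
  show ?thesis
  proof (cases "a = b")
    case True
    then show ?thesis unfolding Rab_def using Nb da lt' by simp
  next
    case False
    define Na where "Na = real (Ncount n k (d - ev {a}))"
    define Nb' where "Nb' = real (Ncount n k (d - ev {b}))"
    have c1: "real (card (Pab n k d a b)) = Nb' * (real_of_int (d a) * (1 - Bq n k d a b a b (d - ev {b})))"
      unfolding count_Pab[OF a b False] Bq_def Nb'_def using da by (simp add: field_simps)
    have c2: "real (card (Pab n k d b a)) = Na * (real_of_int (d b) * (1 - Bq n k d a b b a (d - ev {a})))"
      unfolding count_Pab[OF b a not_sym[OF False], of k d] Bq_def Na_def using db False by (simp add: field_simps insert_commute)
    have eq: "Nb' * (real_of_int (d a) * (1 - Bq n k d a b a b (d - ev {b}))) = Na * (real_of_int (d b) * (1 - Bq n k d a b b a (d - ev {a})))"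
      using c1 c2 card_Pab_sym[OF a b False, of k d] by simp
    have "Rab n k a b d = Na / Nb'" unfolding Rab_def Na_def Nb'_def ..
    also have "\<dots> = (real_of_int (d a) / real_of_int (d b)) *
        ((1 - Bq n k d a b a b (d - ev {b})) / (1 - Bq n k d a b b a (d - ev {a})))"
      using eq Nb db lt' unfolding Nb'_def[symmetric] by (simp add: field_simps)
    finally show ?thesis .
  qed
qed

theorem lemma3p2:
  fixes n k :: nat and d :: "nat \<Rightarrow> int"
  assumes "2 \<le> k" and "k \<le> n"
  shows
  "(\<forall>a \<in> verts n. \<forall>b \<in> verts n.
      kgraphical n k (d - ev {a}) \<and> kgraphical n k (d - ev {b})
      \<and> Bq n k d a b b a (d - ev {a}) < 1 \<longrightarrow>
      Rab n k a b d = (real_of_int (d a) / real_of_int (d b)) *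
        ((1 - Bq n k d a b a b (d - ev {b})) / (1 - Bq n k d a b b a (d - ev {a}))))
   \<and>
   (\<forall>A \<in> ksub (verts n) (k - 1). \<forall>v \<in> verts n - A.
      Pe n k (A \<union> {v}) d > 0
      \<and> (\<forall>B \<in> ksub (verts n - {v}) (k - 1). \<forall>j \<le> k - 1.
           kgraphical n k (d - ev {v} - ev (set (take j (cons_ord_B A B)) \<union> set (drop j (cons_ord_A A)))))
      \<longrightarrow>
      Pe n k (A \<union> {v}) d = real_of_int (d v) * inverse
        (\<Sum>B \<in> ksub (verts n - {v}) (k - 1).
           RBA n k B A (d - ev {v}) *
           ((1 - Pe n k (B \<union> {v}) (d - ev (B \<union> {v})))
            / (1 - Pe n k (A \<union> {v}) (d - ev (A \<union> {v}))))))
   \<and>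
   (\<forall>K \<in> ksub (verts n) (k - 1). \<forall>a \<in> verts n - K. \<forall>b \<in> verts n - K.
      a \<noteq> b \<and> kgraphical n k d \<and> kgraphical n k (d - ev (K \<union> {a}))
      \<and> Pe n k (K \<union> {a}) (d - ev (K \<union> {a})) < 1 \<longrightarrow>
      Y n k a K b d = Pe n k (K \<union> {a}) d / (1 - Pe n k (K \<union> {a}) (d - ev (K \<union> {a})))
        * (Pe n k (K \<union> {b}) (d - ev (K \<union> {a})) - Y n k a K b (d - ev (K \<union> {a}))))"
  using part_a[of _ n _ k d] part_b[OF assms(1)] part_c[OF assms(1)] by blast

end
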